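(* Let $G$ be a finite abelian group and $q:G\to\mathbb Q/\mathbb Z$ a nondegenerate quadratic function. For any subgroup $A\subset G$, with $A^{\perp}=\{x\in G\mid b_q(x,A)=0\}$, $$\gamma(A,q|_A)=\gamma(G,q)\,\overline{\gamma(A^{\perp},q|_{A^{\perp}})},$$ where the bar denotes complex conjugation.
   Context: A quadratic function on a finite abelian group $G$ is a map $q:G\to\mathbb Q/\mathbb Z$ such that $b_q(x,y)=q(x+y)-q(x)-q(y)$ is $\mathbb Z$-bilinear. For a subgroup $H\subset G$, $H^{\perp}=\{x\in G\mid b_q(x,H)=0\}$; $q$ is nondegenerate if $G^{\perp}=0$. The normalized Gauss sum is $\gamma(G,q)=|G|^{-1/2}|G^{\perp}|^{-1/2}\sum_{x\in G}e^{2\pi i q(x)}$, where $|\cdot|$ denotes cardinality. For a restriction $q|_A$, the Gauss sum $\gamma(A,q|_A)$ is computed with $A$ in place of $G$ and $q|_A$ in place of $q$ (so the annihilator is taken inside $A$ with respect to $b_{q|_A}$). *)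

theory Defs
  imports Complex_Main
begin

text \<open>Values in Q/Z are represented by rational representatives; all notions below
  only depend on the classes modulo the integers.\<close>

definition bq :: "('a::ab_group_add \<Rightarrow> rat) \<Rightarrow> 'a \<Rightarrow> 'a \<Rightarrow> rat" where
  "bq q x y = q (x + y) - q x - q y"

definition quadratic_function :: "('a::ab_group_add \<Rightarrow> rat) \<Rightarrow> bool" where
  "quadratic_function q \<longleftrightarrow>
     (\<forall>x y z. bq q (x + y) z - bq q x z - bq q y z \<in> \<int>) \<and>
     (\<forall>x y z. bq q x (y + z) - bq q x y - bq q x z \<in> \<int>)"

definition orth :: "('a::ab_group_add \<Rightarrow> rat) \<Rightarrow> 'a set \<Rightarrow> 'a set \<Rightarrow> 'a set" where
  "orth q H S = {x \<in> H. \<forall>y\<in>S. bq q x y \<in> \<int>}"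

definition nondegenerate :: "('a::ab_group_add \<Rightarrow> rat) \<Rightarrow> bool" where
  "nondegenerate q \<longleftrightarrow> orth q UNIV UNIV = {0}"

definition add_subgroup :: "'a::ab_group_add set \<Rightarrow> bool" where
  "add_subgroup A \<longleftrightarrow> 0 \<in> A \<and> (\<forall>x\<in>A. \<forall>y\<in>A. x + y \<in> A) \<and> (\<forall>x\<in>A. - x \<in> A)"

definition gauss_sum :: "('a::ab_group_add \<Rightarrow> rat) \<Rightarrow> 'a set \<Rightarrow> complex" where
  "gauss_sum q H =
     (\<Sum>x\<in>H. cis (2 * pi * of_rat (q x))) /
     complex_of_real (sqrt (real (card H)) * sqrt (real (card (orth q H H))))"

end

theory Submission
  imports Defs
begin

definition ee :: "rat \<Rightarrow> complex" where
  "ee r = cis (2 * pi * of_rat r)"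

lemma ee_add: "ee (r + s) = ee r * ee s"
  by (simp add: ee_def cis_mult of_rat_add distrib_left)

lemma ee_diff: "ee (r - s) = ee r * cnj (ee s)"
  by (simp add: ee_def cis_cnj cis_mult of_rat_diff right_diff_distrib)

lemma ee_int: "r \<in> \<int> \<Longrightarrow> ee r = 1"
  by (auto simp: ee_def elim!: Ints_cases)

lemma ee_eq1: assumes "ee r = 1" shows "r \<in> \<int>"
proof -
  have "cos (2 * pi * of_rat r) = 1"
    using assms by (simp add: ee_def complex_eq_iff)
  then obtain n :: int where n: "2 * pi * of_rat r = n * 2 * pi"
    by (auto simp: cos_one_2pi_int)
  hence "(of_rat r :: real) = of_int n" by simp
  hence "r = of_int n"
    by (metis of_rat_eq_iff of_rat_of_int_eq)
  thus ?thesis by simp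
qed

lemma char_sum:
  fixes f :: "'a::ab_group_add \<Rightarrow> rat"
  assumes fin: "finite H" and sg: "add_subgroup H"
    and hom: "\<And>x y. x \<in> H \<Longrightarrow> y \<in> H \<Longrightarrow> f (x + y) - f x - f y \<in> \<int>"
  shows "(\<Sum>h\<in>H. ee (f h)) = (if \<forall>h\<in>H. f h \<in> \<int> then of_nat (card H) else 0)"
proof (cases "\<forall>h\<in>H. f h \<in> \<int>")
  case True
  thus ?thesis by (simp add: ee_int)
next
  case False
  then obtain h0 where h0: "h0 \<in> H" "f h0 \<notin> \<int>" by blast
  have ne: "ee (f h0) \<noteq> 1" using h0 ee_eq1 by blast
  have e: "ee (f (h0 + h)) = ee (f h0) * ee (f h)" if "h \<in> H" for h
  proof -
    have "f (h0 + h) = (f (h0 + h) - f h0 - f h) + (f h0 + f h)" by simp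
    hence "ee (f (h0 + h)) = ee (f (h0 + h) - f h0 - f h) * ee (f h0 + f h)"
      by (metis ee_add)
    also have "\<dots> = ee (f h0) * ee (f h)"
      using hom[OF h0(1) that] by (simp add: ee_int ee_add)
    finally show ?thesis .
  qed
  have "(\<Sum>h\<in>H. ee (f h)) = (\<Sum>h\<in>H. ee (f (h0 + h)))"
  proof (rule sum.reindex_bij_witness[where i="\<lambda>h. h0 + h" and j="\<lambda>h. h - h0"])
    fix a assume a: "a \<in> H"
    have "- h0 \<in> H" using sg h0(1) unfolding add_subgroup_def by blast
    hence "a + - h0 \<in> H" using sg a unfolding add_subgroup_def by blast
    thus "a - h0 \<in> H" by simp
    show "h0 + (a - h0) = a" by simp
    show "ee (f (h0 + (a - h0))) = ee (f a)" by simp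
    show "h0 + a - h0 = a" by simp
    show "h0 + a \<in> H" using sg a h0(1) unfolding add_subgroup_def by blast
  qed
  also have "\<dots> = ee (f h0) * (\<Sum>h\<in>H. ee (f h))"
    by (simp add: e sum_distrib_left)
  finally have "(ee (f h0) - 1) * (\<Sum>h\<in>H. ee (f h)) = 0"
    by (simp add: algebra_simps)
  with ne have "(\<Sum>h\<in>H. ee (f h)) = 0" by simp
  with False show ?thesis by (simp only: if_False)
qed


lemma bq_sym: "bq q x y = bq q y x"
  by (simp add: bq_def add.commute)

lemma bq_add1: "quadratic_function q \<Longrightarrow> bq q (x + y) z - bq q x z - bq q y z \<in> \<int>"
  unfolding quadratic_function_def by blast

lemma bq_add2: "quadratic_function q \<Longrightarrow> bq q x (y + z) - bq q x y - bq q x z \<in> \<int>"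
  unfolding quadratic_function_def by blast

lemma bq0_int: assumes "quadratic_function q" shows "bq q 0 z \<in> \<int>"
proof -
  have "bq q (0 + 0) z - bq q 0 z - bq q 0 z \<in> \<int>" using bq_add1[OF assms] .
  hence "- bq q 0 z \<in> \<int>" by simp
  hence "- (- bq q 0 z) \<in> \<int>" by (rule Ints_minus)
  thus ?thesis by simp
qed

lemma ints_add_diff: "(a::rat) - b - c \<in> \<int> \<Longrightarrow> b \<in> \<int> \<Longrightarrow> c \<in> \<int> \<Longrightarrow> a \<in> \<int>"
proof -
  assume "a - b - c \<in> \<int>" "b \<in> \<int>" "c \<in> \<int>"
  hence "(a - b - c) + b + c \<in> \<int>" by (intro Ints_add)
  thus ?thesis by simp
qed

lemma orth_sg:
  assumes qf: "quadratic_function q"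
  shows "add_subgroup (orth q UNIV S)"
  unfolding add_subgroup_def orth_def
proof (intro conjI ballI)
  show "0 \<in> {x \<in> UNIV. \<forall>y\<in>S. bq q x y \<in> \<int>}" using bq0_int[OF qf] by simp
next
  fix x y assume x: "x \<in> {x \<in> UNIV. \<forall>y\<in>S. bq q x y \<in> \<int>}"
    and y: "y \<in> {x \<in> UNIV. \<forall>y\<in>S. bq q x y \<in> \<int>}"
  show "x + y \<in> {x \<in> UNIV. \<forall>y\<in>S. bq q x y \<in> \<int>}"
    using x y ints_add_diff[OF bq_add1[OF qf]] by auto
next
  fix x assume x: "x \<in> {x \<in> UNIV. \<forall>y\<in>S. bq q x y \<in> \<int>}"
  { fix s assume s: "s \<in> S"
    have h: "bq q (- x + x) s - bq q (- x) s - bq q x s \<in> \<int>" by (rule bq_add1[OF qf])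
    have "bq q (- x + x) s \<in> \<int>" using bq0_int[OF qf] by simp
    hence "- (bq q (- x + x) s - bq q (- x) s - bq q x s - bq q (- x + x) s + bq q x s) \<in> \<int>"
      using h x s by (intro Ints_minus Ints_add Ints_diff) auto
    hence "bq q (- x) s \<in> \<int>" by simp }
  thus "- x \<in> {x \<in> UNIV. \<forall>y\<in>S. bq q x y \<in> \<int>}" by simp
qed

lemma sg_UNIV: "add_subgroup UNIV"
  by (simp add: add_subgroup_def)

lemma card_orth:
  fixes q :: "'a::{ab_group_add, finite} \<Rightarrow> rat"
  assumes qf: "quadratic_function q" and nd: "nondegenerate q" and sg: "add_subgroup A"
  shows "card (orth q UNIV A) * card A = card (UNIV::'a set)"
proof -
  define B where "B = orth q UNIV A"
  have 1: "(\<Sum>a\<in>A. ee (bq q x a)) = (if x \<in> B then of_nat (card A) else 0)" for x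
  proof -
    have "(\<Sum>a\<in>A. ee (bq q x a)) = (if \<forall>h\<in>A. bq q x h \<in> \<int> then of_nat (card A) else 0)"
      by (rule char_sum[OF finite sg bq_add2[OF qf]])
    also have "(\<forall>h\<in>A. bq q x h \<in> \<int>) = (x \<in> B)" by (simp add: B_def orth_def)
    finally show ?thesis .
  qed
  have 2: "(\<Sum>x\<in>UNIV. ee (bq q x a)) = (if a = 0 then of_nat (card (UNIV::'a set)) else 0)" for a
  proof -
    have "(\<Sum>x\<in>UNIV. ee (bq q x a)) = (if \<forall>h\<in>UNIV. bq q h a \<in> \<int> then of_nat (card (UNIV::'a set)) else 0)"
      by (rule char_sum[OF finite sg_UNIV bq_add1[OF qf]])
    also have "(\<forall>h\<in>UNIV. bq q h a \<in> \<int>) = (a \<in> orth q UNIV UNIV)"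
      by (auto simp: orth_def bq_sym)
    also have "\<dots> = (a = 0)" using nd by (simp add: nondegenerate_def)
    finally show ?thesis .
  qed
  have "(\<Sum>x\<in>UNIV. \<Sum>a\<in>A. ee (bq q x a)) = (\<Sum>x\<in>UNIV. if x \<in> B then of_nat (card A) else (0::complex))"
    by (simp add: 1)
  also have "\<dots> = of_nat (card B * card A)"
    by (simp add: sum.If_cases)
  finally have L: "(\<Sum>x\<in>UNIV. \<Sum>a\<in>A. ee (bq q x a)) = of_nat (card B * card A)" .
  have "(\<Sum>x\<in>UNIV. \<Sum>a\<in>A. ee (bq q x a)) = (\<Sum>a\<in>A. \<Sum>x\<in>UNIV. ee (bq q x a))"
    by (rule sum.swap)
  also have "\<dots> = (\<Sum>a\<in>A. if a = 0 then of_nat (card (UNIV::'a set)) else 0)" by (simp add: 2)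
  also have "\<dots> = of_nat (card (UNIV::'a set))"
    using sg by (simp add: add_subgroup_def)
  finally have "(of_nat (card B * card A) :: complex) = of_nat (card (UNIV::'a set))" using L by simp
  hence "card B * card A = card (UNIV::'a set)" by (simp only: of_nat_eq_iff)
  thus ?thesis by (simp add: B_def)
qed


lemma orth_orth:
  fixes q :: "'a::{ab_group_add, finite} \<Rightarrow> rat"
  assumes qf: "quadratic_function q" and nd: "nondegenerate q" and sg: "add_subgroup A"
  shows "orth q UNIV (orth q UNIV A) = A"
proof -
  define B where "B = orth q UNIV A"
  have sgB: "add_subgroup B" unfolding B_def by (rule orth_sg[OF qf])
  have c1: "card B * card A = card (UNIV::'a set)" unfolding B_def by (rule card_orth[OF qf nd sg])
  have c2: "card (orth q UNIV B) * card B = card (UNIV::'a set)" by (rule card_orth[OF qf nd sgB])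
  have "0 \<in> B" using sgB by (simp add: add_subgroup_def)
  hence "card B > 0" by (auto simp: card_gt_0_iff)
  hence c: "card A = card (orth q UNIV B)" using c1 c2 by (metis mult.commute mult_left_cancel not_gr0)
  have sub: "A \<subseteq> orth q UNIV B"
    by (auto simp: B_def orth_def bq_sym)
  have "A = orth q UNIV B" by (rule card_subset_eq[OF finite sub c])
  thus ?thesis by (simp add: B_def)
qed

lemma sum_shift: "(\<Sum>x\<in>(UNIV::'a::{ab_group_add,finite} set). g x) = (\<Sum>z\<in>UNIV. g (y + z))"
  by (rule sum.reindex_bij_witness[where j="\<lambda>x. x - y" and i="\<lambda>z. y + z"]) auto

lemma cnj_ee_sum: "cnj (\<Sum>y\<in>B. ee (q y)) = (\<Sum>y\<in>B. cnj (ee (q y)))"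
  by (rule cnj_sum)

lemma main_sum:
  fixes q :: "'a::{ab_group_add, finite} \<Rightarrow> rat"
  assumes qf: "quadratic_function q" and sgB: "add_subgroup B"
  shows "(\<Sum>x\<in>UNIV. ee (q x)) * cnj (\<Sum>y\<in>B. ee (q y))
       = of_nat (card B) * (\<Sum>z\<in>orth q UNIV B. ee (q z))"
proof -
  have "(\<Sum>x\<in>UNIV. ee (q x)) * cnj (\<Sum>y\<in>B. ee (q y))
      = (\<Sum>y\<in>B. \<Sum>x\<in>UNIV. ee (q x - q y))"
    by (simp add: cnj_sum sum_distrib_left sum_distrib_right ee_diff)
  also have "\<dots> = (\<Sum>y\<in>B. \<Sum>z\<in>UNIV. ee (q (y + z) - q y))"
    by (intro sum.cong refl sum_shift)
  also have "\<dots> = (\<Sum>y\<in>B. \<Sum>z\<in>UNIV. ee (q z) * ee (bq q y z))"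
  proof (intro sum.cong refl)
    fix y z
    have "q (y + z) - q y = q z + bq q y z" by (simp add: bq_def)
    thus "ee (q (y + z) - q y) = ee (q z) * ee (bq q y z)" by (simp add: ee_add)
  qed
  also have "\<dots> = (\<Sum>z\<in>UNIV. ee (q z) * (\<Sum>y\<in>B. ee (bq q y z)))"
    by (subst sum.swap) (simp add: sum_distrib_left)
  also have "\<dots> = (\<Sum>z\<in>UNIV. ee (q z) * (if z \<in> orth q UNIV B then of_nat (card B) else 0))"
  proof (intro sum.cong refl arg_cong2[where f="(*)"])
    fix z
    have "(\<Sum>y\<in>B. ee (bq q y z)) = (if \<forall>h\<in>B. bq q h z \<in> \<int> then of_nat (card B) else 0)"
      by (rule char_sum[OF finite sgB bq_add1[OF qf]])
    also have "(\<forall>h\<in>B. bq q h z \<in> \<int>) = (z \<in> orth q UNIV B)"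
      by (auto simp: orth_def bq_sym)
    finally show "(\<Sum>y\<in>B. ee (bq q y z)) = (if z \<in> orth q UNIV B then of_nat (card B) else 0)" .
  qed
  also have "\<dots> = (\<Sum>z\<in>UNIV. if z \<in> orth q UNIV B then of_nat (card B) * ee (q z) else 0)"
    by (intro sum.cong refl) simp
  also have "\<dots> = of_nat (card B) * (\<Sum>z\<in>orth q UNIV B. ee (q z))"
    by (simp add: sum.If_cases sum_distrib_left)
  finally show ?thesis .
qed


theorem lemma1p2:
  fixes q :: "'a::{ab_group_add, finite} \<Rightarrow> rat"
    and A :: "'a set"
  assumes "quadratic_function q"
    and "nondegenerate q"
    and "add_subgroup A"
  shows "gauss_sum q A = gauss_sum q UNIV * cnj (gauss_sum q (orth q UNIV A))"
proof -
  note qf = assms(1) and nd = assms(2) and sg = assms(3)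
  define B where "B = orth q UNIV A"
  have sgB: "add_subgroup B" unfolding B_def by (rule orth_sg[OF qf])
  have BB: "orth q UNIV B = A" unfolding B_def by (rule orth_orth[OF qf nd sg])
  have cBA: "card B * card A = card (UNIV::'a set)" unfolding B_def by (rule card_orth[OF qf nd sg])
  define R where "R = A \<inter> B"
  have RA: "orth q A A = R" by (auto simp: R_def B_def orth_def)
  have RB: "orth q B B = R"
  proof -
    have "orth q B B = B \<inter> orth q UNIV B" by (auto simp: orth_def)
    thus ?thesis using BB by (auto simp: R_def)
  qed
  have RG: "orth q UNIV UNIV = {0}" using nd by (simp add: nondegenerate_def)
  have "0 \<in> R" using sg sgB by (simp add: R_def add_subgroup_def)
  hence r0: "card R > 0" by (auto simp: card_gt_0_iff)
  have "0 \<in> B" using sgB by (simp add: add_subgroup_def)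
  hence b0: "card B > 0" by (auto simp: card_gt_0_iff)
  have "0 \<in> A" using sg by (simp add: add_subgroup_def)
  hence a0: "card A > 0" by (auto simp: card_gt_0_iff)
  define SA where "SA = (\<Sum>x\<in>A. cis (2 * pi * of_rat (q x)))"
  define SB where "SB = (\<Sum>x\<in>B. cis (2 * pi * of_rat (q x)))"
  define SG where "SG = (\<Sum>x\<in>UNIV. cis (2 * pi * of_rat (q x)))"
  have key: "SG * cnj SB = of_nat (card B) * SA"
    using main_sum[OF qf sgB] BB by (simp add: SA_def SB_def SG_def ee_def)
  define a where "a = sqrt (real (card A))"
  define b where "b = sqrt (real (card B))"
  define r where "r = sqrt (real (card R))"
  have n: "sqrt (real (card (UNIV::'a set))) = b * a"
    unfolding a_def b_def using cBA by (metis of_nat_mult real_sqrt_mult)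
  have bb: "b * b = real (card B)" unfolding b_def by simp
  have pos: "a > 0" "b > 0" "r > 0" using a0 b0 r0 by (auto simp: a_def b_def r_def)
  have lhs: "gauss_sum q A = SA / complex_of_real (a * r)"
    by (simp add: gauss_sum_def RA SA_def a_def r_def)
  have g: "gauss_sum q UNIV = SG / complex_of_real (b * a)"
    by (simp add: gauss_sum_def RG SG_def n)
  have gb: "gauss_sum q B = SB / complex_of_real (b * r)"
    by (simp add: gauss_sum_def RB SB_def b_def r_def)
  have "gauss_sum q UNIV * cnj (gauss_sum q B) = SG * cnj SB / complex_of_real (b * a * (b * r))"
    by (simp add: g gb)
  also have "\<dots> = of_nat (card B) * SA / complex_of_real (b * a * (b * r))" by (simp add: key)
  also have "\<dots> = complex_of_real (b * b) * SA / (complex_of_real (b * b) * complex_of_real (a * r))"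
  proof -
    have cb: "(of_nat (card B)::complex) = complex_of_real (b * b)"
      using bb by (metis of_real_of_nat_eq)
    have e: "b * a * (b * r) = (b * b) * (a * r)" by (simp add: mult_ac)
    show ?thesis unfolding cb e of_real_mult[of "b * b" "a * r"] by (rule refl)
  qed
  also have "\<dots> = SA / complex_of_real (a * r)"
    using pos by (simp add: field_simps)
  finally show ?thesis using lhs by (simp add: B_def)
qed

end
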